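(* Let $n\ge 2$. The completely isolated subsemigroups of $\mathcal{I}^{\ast}_n$ are exactly $\mathcal{I}^{\ast}_n$, $\mathcal{S}_n$ and $\mathcal{I}^{\ast}_n\setminus\mathcal{S}_n$.
   Context: Let $X=\{1,\dots,n\}$, $X'=\{1',\dots,n'\}$. $\mathcal{I}^{\ast}_n$ is the set of partitions of $X\cup X'$ all of whose blocks meet both $X$ and $X'$, with product: regard $\alpha$ as a partition of $X\cup X''$ and $\beta$ as a partition of $X''\cup X'$ ($X''$ a third copy of $X$), and let $\alpha\beta$ be the partition of $X\cup X'$ induced by the equivalence on $X\cup X''\cup X'$ generated by the blocks of both. $\mathcal{S}_n$ is its group of units: the elements all of whose blocks are $\{x,\pi(x)'\}$ for a permutation $\pi$ of $X$. A subsemigroup $T$ of a semigroup $S$ is completely isolated if for all $a,b\in S$, $ab\in T$ implies $a\in T$ or $b\in T$. *)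

theory Defs
  imports "HOL-Library.Disjoint_Sets"
begin

text \<open>Points of X \<union> X': (i,0) stands for i \<in> X, (i,1) for i' \<in> X'.
  In the product, level 0 is X, level 1 is X'' and level 2 is X'.\<close>

definition Pts :: "nat \<Rightarrow> (nat \<times> nat) set" where
  "Pts n = {1..n} \<times> {0, 1}"

definition Istar :: "nat \<Rightarrow> (nat \<times> nat) set set set" where
  "Istar n = {P. partition_on (Pts n) P \<and>
      (\<forall>B\<in>P. (\<exists>i. (i, 0) \<in> B) \<and> (\<exists>i. (i, 1) \<in> B))}"

definition blockrel :: "('a set) set \<Rightarrow> ('a \<times> 'a) set" where
  "blockrel P = (\<Union>B\<in>P. B \<times> B)"

definition shift_up :: "(nat \<times> nat) set set \<Rightarrow> (nat \<times> nat) set set" where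
  "shift_up P = (\<lambda>B. (\<lambda>(i, l). (i, l + 1)) ` B) ` P"

definition outer :: "nat \<times> nat \<Rightarrow> nat \<times> nat" where
  "outer = (\<lambda>(i, l). (i, 2 * l))"

text \<open>The product: equivalence on X \<union> X'' \<union> X' generated by the blocks of both,
  restricted to X \<union> X' (levels 0 and 2), with level 2 renamed back to 1.\<close>
definition pmult :: "nat \<Rightarrow> (nat \<times> nat) set set \<Rightarrow> (nat \<times> nat) set set \<Rightarrow> (nat \<times> nat) set set" where
  "pmult n a b =
     (let R = (blockrel a \<union> blockrel (shift_up b))\<^sup>* in
      (\<lambda>x. {y \<in> Pts n. (outer x, outer y) \<in> R}) ` Pts n)"

definition Sn :: "nat \<Rightarrow> (nat \<times> nat) set set set" where
  "Sn n = {P \<in> Istar n. \<exists>\<pi>. bij_betw \<pi> {1..n} {1..n} \<and>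
              P = (\<lambda>x. {(x, 0), (\<pi> x, 1)}) ` {1..n}}"

definition completely_isolated_subsemigroup ::
    "nat \<Rightarrow> (nat \<times> nat) set set set \<Rightarrow> bool" where
  "completely_isolated_subsemigroup n T \<longleftrightarrow>
     T \<noteq> {} \<and> T \<subseteq> Istar n \<and> (\<forall>a\<in>T. \<forall>b\<in>T. pmult n a b \<in> T) \<and>
     (\<forall>a\<in>Istar n. \<forall>b\<in>Istar n. pmult n a b \<in> T \<longrightarrow> a \<in> T \<or> b \<in> T)"

end

theory Submission
  imports Defs "HOL-Combinatorics.Cycles"
begin

definition RR :: "(nat \<times> nat) set set \<Rightarrow> (nat \<times> nat) set set \<Rightarrow> ((nat \<times> nat) \<times> (nat \<times> nat)) set" where
  "RR a b = (blockrel a \<union> blockrel (shift_up b))\<^sup>*"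

definition cls :: "nat \<Rightarrow> (nat \<times> nat) set set \<Rightarrow> (nat \<times> nat) set set \<Rightarrow> nat \<times> nat \<Rightarrow> (nat \<times> nat) set" where
  "cls n a b x = {y \<in> Pts n. (outer x, outer y) \<in> RR a b}"

lemma pmult_cls: "pmult n a b = cls n a b ` Pts n"
  unfolding pmult_def cls_def RR_def Let_def by simp

lemma Pts_iff[simp]: "(i, l) \<in> Pts n \<longleftrightarrow> 1 \<le> i \<and> i \<le> n \<and> (l = 0 \<or> l = 1)"
  by (auto simp: Pts_def)

lemma outer_simps[simp]: "outer (i, 0) = (i, 0)" "outer (i, Suc 0) = (i, 2)"
  by (auto simp: outer_def)

lemma Istar_sub: "P \<in> Istar n \<Longrightarrow> B \<in> P \<Longrightarrow> B \<subseteq> Pts n"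
  by (auto simp: Istar_def partition_on_def)

lemma Istar_cover: "P \<in> Istar n \<Longrightarrow> x \<in> Pts n \<Longrightarrow> \<exists>B\<in>P. x \<in> B"
  by (auto simp: Istar_def partition_on_def)

lemma Istar_top: "P \<in> Istar n \<Longrightarrow> B \<in> P \<Longrightarrow> \<exists>i. (i, 0) \<in> B"
  by (auto simp: Istar_def)

lemma Istar_bot: "P \<in> Istar n \<Longrightarrow> B \<in> P \<Longrightarrow> \<exists>i. (i, 1) \<in> B"
  by (auto simp: Istar_def)

lemma Istar_disj: "P \<in> Istar n \<Longrightarrow> B \<in> P \<Longrightarrow> B' \<in> P \<Longrightarrow> x \<in> B \<Longrightarrow> x \<in> B' \<Longrightarrow> B = B'"
  unfolding Istar_def partition_on_def disjoint_def by blast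

lemma Istar_finite: "P \<in> Istar n \<Longrightarrow> finite P"
proof -
  assume "P \<in> Istar n"
  then have "P \<subseteq> Pow (Pts n)" by (auto dest: Istar_sub)
  moreover have "finite (Pts n)" by (simp add: Pts_def)
  ultimately show ?thesis by (meson finite_Pow_iff finite_subset)
qed

lemma a_step: "A \<in> a \<Longrightarrow> u \<in> A \<Longrightarrow> v \<in> A \<Longrightarrow> (u, v) \<in> RR a b"
  unfolding RR_def blockrel_def by blast

lemma b_step: "B \<in> b \<Longrightarrow> (i, l) \<in> B \<Longrightarrow> (j, m) \<in> B \<Longrightarrow> ((i, Suc l), (j, Suc m)) \<in> RR a b"
proof -
  assume h: "B \<in> b" "(i, l) \<in> B" "(j, m) \<in> B"
  let ?B = "(\<lambda>(i, l). (i, l + 1)) ` B"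
  have "?B \<in> shift_up b" using h by (auto simp: shift_up_def)
  moreover have "(i, Suc l) \<in> ?B" "(j, Suc m) \<in> ?B" using h by force+
  ultimately show ?thesis unfolding RR_def blockrel_def by blast
qed

lemma RR_trans: "(u, v) \<in> RR a b \<Longrightarrow> (v, w) \<in> RR a b \<Longrightarrow> (u, w) \<in> RR a b"
  unfolding RR_def by simp

lemma RR_refl[simp]: "(u, u) \<in> RR a b"
  unfolding RR_def by simp

lemma RR_sym: "(u, v) \<in> RR a b \<Longrightarrow> (v, u) \<in> RR a b"
proof -
  have "sym (blockrel a \<union> blockrel (shift_up b))"
    unfolding sym_def blockrel_def by blast
  then have "sym (RR a b)" unfolding RR_def by (rule sym_rtrancl)
  then show "(u, v) \<in> RR a b \<Longrightarrow> (v, u) \<in> RR a b" unfolding sym_def by blast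
qed

definition QQ where "QQ n a b = {(x, y). x \<in> Pts n \<and> y \<in> Pts n \<and> (outer x, outer y) \<in> RR a b}"

lemma equiv_QQ: "equiv (Pts n) (QQ n a b)"
  unfolding equiv_def refl_on_def sym_def trans_def QQ_def
  by (auto intro: RR_sym RR_trans)

lemma pmult_quot: "pmult n a b = Pts n // QQ n a b"
  unfolding pmult_cls quotient_def QQ_def cls_def by auto

lemma cls_mem: "x \<in> Pts n \<Longrightarrow> x \<in> cls n a b x"
  unfolding cls_def by simp

lemma cls_eq: "x \<in> Pts n \<Longrightarrow> y \<in> cls n a b x \<Longrightarrow> cls n a b y = cls n a b x"
  unfolding cls_def by (auto intro: RR_sym RR_trans)

lemma pmult_Istar:
  assumes a: "a \<in> Istar n" and b: "b \<in> Istar n"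
  shows "pmult n a b \<in> Istar n"
proof -
  have p: "partition_on (Pts n) (pmult n a b)"
    unfolding pmult_quot by (rule partition_on_quotient[OF equiv_QQ])
  have "(\<exists>i. (i, 0) \<in> C) \<and> (\<exists>i. (i, 1) \<in> C)" if C: "C \<in> pmult n a b" for C
  proof -
    obtain x where x: "x \<in> Pts n" "C = cls n a b x" using C unfolding pmult_cls by auto
    obtain i l where il: "x = (i, l)" by force
    show ?thesis
    proof (cases "l = 0")
      case True
      obtain A where A: "A \<in> a" "x \<in> A" using Istar_cover[OF a x(1)] by blast
      obtain k where k: "(k, 1) \<in> A" using Istar_bot[OF a A(1)] by blast
      have kP: "(k, 0) \<in> Pts n" using Istar_sub[OF a A(1)] k by auto
      obtain B where B: "B \<in> b" "(k, 0) \<in> B" using Istar_cover[OF b kP] by blast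
      obtain j where j: "(j, 1) \<in> B" using Istar_bot[OF b B(1)] by blast
      have jP: "(j, 1) \<in> Pts n" using Istar_sub[OF b B(1)] j by auto
      have "(x, (k, 1)) \<in> RR a b" using a_step[OF A k] .
      moreover have "((k, Suc 0), (j, Suc 1)) \<in> RR a b" using b_step[OF B j] by simp
      ultimately have "(outer x, outer (j, 1)) \<in> RR a b" using True il
        by (auto intro: RR_trans simp: numeral_2_eq_2)
      then have "(j, 1) \<in> C" using x jP unfolding cls_def by simp
      moreover have "(i, 0) \<in> C" using x il True cls_mem by auto
      ultimately show ?thesis by blast
    next
      case False
      then have l1: "l = 1" using x il by auto
      obtain B where B: "B \<in> b" "x \<in> B" using Istar_cover[OF b x(1)] by blast
      obtain k where k: "(k, 0) \<in> B" using Istar_top[OF b B(1)] by blast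
      have kP: "(k, 1) \<in> Pts n" using Istar_sub[OF b B(1)] k by auto
      obtain A where A: "A \<in> a" "(k, 1) \<in> A" using Istar_cover[OF a kP] by blast
      obtain j where j: "(j, 0) \<in> A" using Istar_top[OF a A(1)] by blast
      have jP: "(j, 0) \<in> Pts n" using Istar_sub[OF a A(1)] j by auto
      have "((i, Suc 1), (k, Suc 0)) \<in> RR a b" using b_step[OF B(1) _ k] B(2) il l1 by simp
      moreover have "((k, 1), (j, 0)) \<in> RR a b" using a_step[OF A j] .
      ultimately have "(outer x, outer (j, 0)) \<in> RR a b" using il l1
        by (auto intro: RR_trans simp: numeral_2_eq_2)
      then have "(j, 0) \<in> C" using x jP unfolding cls_def by simp
      moreover have "(i, 1) \<in> C" using x il l1 cls_mem by auto
      ultimately show ?thesis by blast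
    qed
  qed
  then show ?thesis using p unfolding Istar_def by blast
qed

definition unitP :: "nat \<Rightarrow> (nat \<Rightarrow> nat) \<Rightarrow> (nat \<times> nat) set set" where
  "unitP n \<pi> = (\<lambda>x. {(x, 0), (\<pi> x, 1)}) ` {1..n}"

lemma unitP_Istar:
  assumes p: "bij_betw \<pi> {1..n} {1..n}"
  shows "unitP n \<pi> \<in> Istar n"
proof -
  have pin: "x \<in> {1..n} \<Longrightarrow> \<pi> x \<in> {1..n}" for x using p by (rule bij_betw_apply)
  have inj: "x \<in> {1..n} \<Longrightarrow> y \<in> {1..n} \<Longrightarrow> \<pi> x = \<pi> y \<Longrightarrow> x = y" for x y
    using p unfolding bij_betw_def inj_on_def by blast
  have U1: "\<Union>(unitP n \<pi>) \<subseteq> Pts n"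
  proof
    fix z assume "z \<in> \<Union>(unitP n \<pi>)"
    then obtain x where x: "x \<in> {1..n}" "z = (x, 0) \<or> z = (\<pi> x, 1)" unfolding unitP_def by blast
    then show "z \<in> Pts n" using pin[OF x(1)] by (cases "z = (x,0)") auto
  qed
  have U2: "Pts n \<subseteq> \<Union>(unitP n \<pi>)"
  proof
    fix z assume z: "z \<in> Pts n"
    obtain i l where il: "z = (i, l)" by force
    show "z \<in> \<Union>(unitP n \<pi>)"
    proof (cases "l = 0")
      case True
      then have "i \<in> {1..n}" using z il by simp
      then have "{(i, 0), (\<pi> i, 1)} \<in> unitP n \<pi>" unfolding unitP_def by blast
      then show ?thesis using il True by blast
    next
      case False
      then have "l = 1" "i \<in> {1..n}" using z il by auto
      then have "i \<in> \<pi> ` {1..n}" using p by (simp add: bij_betw_def)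
      then obtain x where x: "x \<in> {1..n}" "i = \<pi> x" by blast
      then have "{(x, 0), (\<pi> x, 1)} \<in> unitP n \<pi>" unfolding unitP_def by blast
      then show ?thesis using il \<open>l = 1\<close> x by blast
    qed
  qed
  have D: "disjoint (unitP n \<pi>)"
  proof (rule disjointI)
    fix A B assume A: "A \<in> unitP n \<pi>" and B: "B \<in> unitP n \<pi>" and ne: "A \<noteq> B"
    obtain x where x: "x \<in> {1..n}" "A = {(x, 0), (\<pi> x, 1)}" using A unfolding unitP_def by blast
    obtain y where y: "y \<in> {1..n}" "B = {(y, 0), (\<pi> y, 1)}" using B unfolding unitP_def by blast
    have "x \<noteq> y" using ne x y by blast
    then have "\<pi> x \<noteq> \<pi> y" using inj x y by blast
    then show "A \<inter> B = {}" using x y \<open>x \<noteq> y\<close> by auto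
  qed
  have E: "{} \<notin> unitP n \<pi>" unfolding unitP_def by blast
  have "partition_on (Pts n) (unitP n \<pi>)"
    unfolding partition_on_def using U1 U2 D E by blast
  moreover have "\<forall>B\<in>unitP n \<pi>. (\<exists>i. (i, 0) \<in> B) \<and> (\<exists>i. (i, 1) \<in> B)"
    unfolding unitP_def by blast
  ultimately show ?thesis unfolding Istar_def by blast
qed

definition topinj :: "(nat \<times> nat) set set \<Rightarrow> bool" where
  "topinj P \<longleftrightarrow> (\<forall>B\<in>P. \<forall>i j. (i, 0) \<in> B \<longrightarrow> (j, 0) \<in> B \<longrightarrow> i = j)"

lemma Sn_unitP: "P \<in> Sn n \<Longrightarrow> \<exists>\<pi>. \<pi> permutes {1..n} \<and> P = unitP n \<pi>"
proof -
  assume "P \<in> Sn n"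
  then obtain \<pi> where p: "bij_betw \<pi> {1..n} {1..n}" "P = unitP n \<pi>"
    unfolding Sn_def unitP_def by blast
  define \<sigma> where "\<sigma> x = (if x \<in> {1..n} then \<pi> x else x)" for x
  have eq: "\<And>x. x \<in> {1..n} \<Longrightarrow> \<pi> x = \<sigma> x" by (simp add: \<sigma>_def)
  have "bij_betw \<sigma> {1..n} {1..n} = bij_betw \<pi> {1..n} {1..n}"
    by (rule bij_betw_cong) (simp add: \<sigma>_def)
  then have "bij_betw \<sigma> {1..n} {1..n}" using p(1) by simp
  then have "\<sigma> permutes {1..n}" by (rule bij_imp_permutes) (auto simp: \<sigma>_def)
  moreover have "unitP n \<sigma> = unitP n \<pi>" unfolding unitP_def \<sigma>_def by auto
  ultimately show ?thesis using p by metis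
qed

lemma unitP_Sn: "\<pi> permutes {1..n} \<Longrightarrow> unitP n \<pi> \<in> Sn n"
proof -
  assume "\<pi> permutes {1..n}"
  then have b: "bij_betw \<pi> {1..n} {1..n}" by (rule permutes_imp_bij)
  have "unitP n \<pi> \<in> Istar n" using unitP_Istar[OF b] .
  then show ?thesis using b unfolding Sn_def unitP_def by blast
qed

lemma Sn_Istar: "P \<in> Sn n \<Longrightarrow> P \<in> Istar n"
  unfolding Sn_def by blast

lemma Sn_topinj: "P \<in> Sn n \<Longrightarrow> topinj P"
proof -
  assume "P \<in> Sn n"
  then obtain \<pi> where P: "P = (\<lambda>x. {(x, 0), (\<pi> x, 1)}) ` {1..n}" unfolding Sn_def by blast
  show "topinj P" unfolding topinj_def P by force
qed

lemma topinj_Sn: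
  assumes P: "P \<in> Istar n" and t: "topinj P"
  shows "P \<in> Sn n"
proof -
  define blk where "blk x = (THE B. B \<in> P \<and> x \<in> B)" for x
  have blk: "blk x \<in> P \<and> x \<in> blk x" if xP: "x \<in> Pts n" for x
  proof -
    obtain B where "B \<in> P" "x \<in> B" using Istar_cover[OF P xP] by blast
    then have "\<exists>!B. B \<in> P \<and> x \<in> B" using Istar_disj[OF P] by blast
    then show ?thesis unfolding blk_def by (rule theI')
  qed
  have blk_eq: "B \<in> P \<Longrightarrow> x \<in> B \<Longrightarrow> blk x = B" for B x
    using blk Istar_disj[OF P] Istar_sub[OF P] by blast
  define f where "f i = blk (i, 0)" for i
  define g where "g j = blk (j, 1)" for j
  have finj: "inj_on f {1..n}"
  proof (rule inj_onI)
    fix i j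
    assume ij: "i \<in> {1..n}" "j \<in> {1..n}" "f i = f j"
    have "f i \<in> P" "(i, 0) \<in> f i" "(j, 0) \<in> f i"
      using blk[of "(i,0)"] blk[of "(j,0)"] ij unfolding f_def by auto
    then show "i = j" using t unfolding topinj_def by blast
  qed
  have fsurj: "f ` {1..n} = P"
  proof
    show "f ` {1..n} \<subseteq> P" using blk unfolding f_def by auto
    show "P \<subseteq> f ` {1..n}"
    proof
      fix B assume B: "B \<in> P"
      obtain i where i: "(i, 0) \<in> B" using Istar_top[OF P B] by blast
      then have "i \<in> {1..n}" using Istar_sub[OF P B] by auto
      then show "B \<in> f ` {1..n}" using blk_eq[OF B i] unfolding f_def by auto
    qed
  qed
  have gsurj: "g ` {1..n} = P"
  proof
    show "g ` {1..n} \<subseteq> P" using blk unfolding g_def by auto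
    show "P \<subseteq> g ` {1..n}"
    proof
      fix B assume B: "B \<in> P"
      obtain i where i: "(i, 1) \<in> B" using Istar_bot[OF P B] by blast
      then have "i \<in> {1..n}" using Istar_sub[OF P B] by auto
      then show "B \<in> g ` {1..n}" using blk_eq[OF B i] unfolding g_def by auto
    qed
  qed
  have cardP: "card P = n" using finj fsurj card_image by fastforce
  have ginj: "inj_on g {1..n}"
    using gsurj cardP by (simp add: eq_card_imp_inj_on)
  define \<pi> where "\<pi> i = (SOME j. (j, 1) \<in> f i)" for i
  have pi1: "(\<pi> i, 1) \<in> f i" if iI: "i \<in> {1..n}" for i
  proof -
    have "f i \<in> P" using iI fsurj by auto
    then obtain j where "(j, 1) \<in> f i" using Istar_bot[OF P] by blast
    then show ?thesis unfolding \<pi>_def by (rule someI)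
  qed
  have pin: "\<pi> i \<in> {1..n}" if iI: "i \<in> {1..n}" for i
  proof -
    have "f i \<in> P" using iI fsurj by auto
    then have "(\<pi> i, 1) \<in> Pts n" using pi1[OF iI] Istar_sub[OF P] by blast
    then show ?thesis by simp
  qed
  have gpi: "g (\<pi> i) = f i" if "i \<in> {1..n}" for i
    using blk_eq[OF _ pi1[OF that]] that fsurj unfolding g_def by auto
  have piinj: "inj_on \<pi> {1..n}"
  proof (rule inj_onI)
    fix i j assume "i \<in> {1..n}" "j \<in> {1..n}" "\<pi> i = \<pi> j"
    then have "f i = f j" using gpi by metis
    then show "i = j" using finj \<open>i \<in> _\<close> \<open>j \<in> _\<close> by (auto dest: inj_onD)
  qed
  have "\<pi> ` {1..n} \<subseteq> {1..n}" using pin by blast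
  then have "\<pi> ` {1..n} = {1..n}"
    using endo_inj_surj[of "{1..n}" \<pi>] piinj by blast
  then have bij: "bij_betw \<pi> {1..n} {1..n}" using piinj by (simp add: bij_betw_def)
  have blocks: "f i = {(i, 0), (\<pi> i, 1)}" if i: "i \<in> {1..n}" for i
  proof
    show "{(i, 0), (\<pi> i, 1)} \<subseteq> f i" using pi1[OF i] blk[of "(i,0)"] i unfolding f_def by auto
    show "f i \<subseteq> {(i, 0), (\<pi> i, 1)}"
    proof
      fix z assume z: "z \<in> f i"
      have fiP: "f i \<in> P" using i fsurj by auto
      obtain k l where kl: "z = (k, l)" by force
      have zP: "z \<in> Pts n" using Istar_sub[OF P fiP] z by auto
      show "z \<in> {(i, 0), (\<pi> i, 1)}"
      proof (cases "l = 0")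
        case True
        have "(i, 0) \<in> f i" using blk[of "(i,0)"] i unfolding f_def by simp
        then have "k = i" using t fiP z kl True unfolding topinj_def by blast
        then show ?thesis using kl True by simp
      next
        case False
        then have l1: "l = 1" "k \<in> {1..n}" using zP kl by auto
        have "g k = f i" using blk_eq[OF fiP] z kl l1 unfolding g_def by simp
        then have "g k = g (\<pi> i)" using gpi[OF i] by simp
        then have "k = \<pi> i" using ginj l1 pin[OF i] by (auto dest: inj_onD)
        then show ?thesis using kl l1 by simp
      qed
    qed
  qed
  have "P = f ` {1..n}" using fsurj by simp
  also have "\<dots> = unitP n \<pi>" unfolding unitP_def using blocks by (rule image_cong[OF refl])
  finally have "P = unitP n \<pi>" .
  then show ?thesis using bij P unfolding Sn_def unitP_def by blast
qed

lemma Sn_iff_topinj: "P \<in> Istar n \<Longrightarrow> P \<in> Sn n \<longleftrightarrow> topinj P"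
  using Sn_topinj topinj_Sn by blast

lemma pmult_Sn_left:
  assumes a: "a \<in> Istar n" and b: "b \<in> Istar n" and ab: "pmult n a b \<in> Sn n"
  shows "a \<in> Sn n"
proof (rule ccontr)
  assume "a \<notin> Sn n"
  then have "\<not> topinj a" using topinj_Sn[OF a] by blast
  then obtain B i j where B: "B \<in> a" "(i, 0) \<in> B" "(j, 0) \<in> B" "i \<noteq> j"
    unfolding topinj_def by blast
  have iP: "(i, 0) \<in> Pts n" and jP: "(j, 0) \<in> Pts n" using B Istar_sub[OF a] by blast+
  have "((i, 0), (j, 0)) \<in> RR a b" using a_step[OF B(1) B(2) B(3)] .
  then have "(j, 0) \<in> cls n a b (i, 0)" using jP unfolding cls_def by simp
  moreover have "(i, 0) \<in> cls n a b (i, 0)" using cls_mem[OF iP] .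
  moreover have "cls n a b (i, 0) \<in> pmult n a b" using iP unfolding pmult_cls by blast
  ultimately have "\<not> topinj (pmult n a b)" using B(4) unfolding topinj_def by blast
  then show False using Sn_topinj[OF ab] by blast
qed

definition psi :: "(nat \<Rightarrow> nat) \<Rightarrow> nat \<times> nat \<Rightarrow> nat \<times> nat" where
  "psi \<pi> z = (if snd z = 0 then (\<pi> (fst z), 0) else z)"

definition pull :: "nat \<Rightarrow> (nat \<Rightarrow> nat) \<Rightarrow> (nat \<times> nat) set set \<Rightarrow> (nat \<times> nat) set set" where
  "pull n \<pi> b = (\<lambda>B. {y \<in> Pts n. psi \<pi> y \<in> B}) ` b"

lemma psi_simps[simp]: "psi \<pi> (i, 0) = (\<pi> i, 0)" "psi \<pi> (i, Suc l) = (i, Suc l)"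
  by (auto simp: psi_def)

lemma psi_Pts: "\<pi> permutes {1..n} \<Longrightarrow> x \<in> Pts n \<Longrightarrow> psi \<pi> x \<in> Pts n"
proof -
  assume p: "\<pi> permutes {1..n}" and x: "x \<in> Pts n"
  obtain i l where il: "x = (i, l)" by force
  show ?thesis
  proof (cases "l = 0")
    case True
    then have "i \<in> {1..n}" using x il by simp
    then have "\<pi> i \<in> {1..n}" using permutes_in_image[OF p, of i] by blast
    then show ?thesis using il True by simp
  next
    case False
    then obtain m where "l = Suc m" by (cases l) auto
    then show ?thesis using x il by simp
  qed
qed

lemma psi_inv: "\<pi> permutes {1..n} \<Longrightarrow> psi \<pi> (psi (inv \<pi>) z) = z"
  by (cases z) (auto simp: psi_def permutes_inverses)

lemma psi_inv2: "\<pi> permutes {1..n} \<Longrightarrow> psi (inv \<pi>) (psi \<pi> z) = z"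
  by (cases z) (auto simp: psi_def permutes_inverses)

lemma pull_pull:
  assumes p: "\<pi> permutes {1..n}" and b: "b \<in> Istar n"
  shows "pull n (inv \<pi>) (pull n \<pi> b) = b"
proof -
  have ip: "inv \<pi> permutes {1..n}" using p by (rule permutes_inv)
  have "pull n (inv \<pi>) (pull n \<pi> b) = (\<lambda>B. {y \<in> Pts n. psi (inv \<pi>) y \<in> {z \<in> Pts n. psi \<pi> z \<in> B}}) ` b"
    unfolding pull_def image_image by simp
  also have "\<dots> = (\<lambda>B. B) ` b"
  proof (rule image_cong[OF refl])
    fix B assume B: "B \<in> b"
    show "{y \<in> Pts n. psi (inv \<pi>) y \<in> {z \<in> Pts n. psi \<pi> z \<in> B}} = B"
      using psi_Pts[OF ip] psi_inv[OF p] Istar_sub[OF b B] by auto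
  qed
  finally show ?thesis by simp
qed

lemma shift_up_mem: "C \<in> shift_up b \<Longrightarrow> u \<in> C \<Longrightarrow> \<exists>B\<in>b. \<exists>i l. (i, l) \<in> B \<and> u = (i, Suc l) \<and> C = (\<lambda>(i, l). (i, l + 1)) ` B"
  unfolding shift_up_def by auto

lemma blockrel_shift_trans:
  assumes b: "b \<in> Istar n" and pq: "(p, q) \<in> blockrel (shift_up b)" and qr: "(q, r) \<in> blockrel (shift_up b)"
  shows "(p, r) \<in> blockrel (shift_up b)"
proof -
  obtain C1 where C1: "C1 \<in> shift_up b" "p \<in> C1" "q \<in> C1" using pq unfolding blockrel_def by blast
  obtain C2 where C2: "C2 \<in> shift_up b" "q \<in> C2" "r \<in> C2" using qr unfolding blockrel_def by blast
  obtain B1 i1 l1 where B1: "B1 \<in> b" "(i1, l1) \<in> B1" "q = (i1, Suc l1)" "C1 = (\<lambda>(i, l). (i, l + 1)) ` B1"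
    using shift_up_mem[OF C1(1) C1(3)] by blast
  obtain B2 i2 l2 where B2: "B2 \<in> b" "(i2, l2) \<in> B2" "q = (i2, Suc l2)" "C2 = (\<lambda>(i, l). (i, l + 1)) ` B2"
    using shift_up_mem[OF C2(1) C2(2)] by blast
  have "(i1, l1) = (i2, l2)" using B1(3) B2(3) by simp
  then have "B1 = B2" using Istar_disj[OF b B1(1) B2(1) B1(2)] B2(2) by simp
  then have "C1 = C2" using B1(4) B2(4) by simp
  then show ?thesis using C1 C2 unfolding blockrel_def by blast
qed

lemma pmult_unit_rel:
  assumes p: "\<pi> permutes {1..n}" and b: "b \<in> Istar n" and x: "x \<in> Pts n" and y: "y \<in> Pts n"
  shows "(outer x, outer y) \<in> RR (unitP n \<pi>) b \<longleftrightarrow> (\<exists>B\<in>b. psi \<pi> x \<in> B \<and> psi \<pi> y \<in> B)"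
proof -
  let ?a = "unitP n \<pi>"
  define c where "c z = (if snd z = 0 then (\<pi> (fst z), 1) else z)" for z :: "nat \<times> nat"
  define E where "E = Id \<union> blockrel (shift_up b)"
  have Etrans: "(p, q) \<in> E \<Longrightarrow> (q, r) \<in> E \<Longrightarrow> (p, r) \<in> E" for p q r
    unfolding E_def using blockrel_shift_trans[OF b] by blast
  have stepE: "(c v, c w) \<in> E" if vw: "(v, w) \<in> blockrel ?a \<union> blockrel (shift_up b)" for v w
  proof (cases "(v, w) \<in> blockrel ?a")
    case True
    then obtain z where z: "z \<in> {1..n}" "v \<in> {(z, 0), (\<pi> z, 1)}" "w \<in> {(z, 0), (\<pi> z, 1)}"
      unfolding blockrel_def unitP_def by blast
    then have "c v = (\<pi> z, 1)" "c w = (\<pi> z, 1)" unfolding c_def by auto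
    then show ?thesis unfolding E_def by simp
  next
    case False
    then have "(v, w) \<in> blockrel (shift_up b)" using vw by blast
    then obtain C where C: "C \<in> shift_up b" "v \<in> C" "w \<in> C" unfolding blockrel_def by blast
    obtain B1 i1 l1 where "v = (i1, Suc l1)" using shift_up_mem[OF C(1) C(2)] by blast
    moreover obtain B2 i2 l2 where "w = (i2, Suc l2)" using shift_up_mem[OF C(1) C(3)] by blast
    ultimately have "c v = v" "c w = w" unfolding c_def by auto
    then show ?thesis using \<open>(v, w) \<in> blockrel (shift_up b)\<close> unfolding E_def by simp
  qed
  have claim1: "(c u, c v) \<in> E" if "(u, v) \<in> RR ?a b" for u v
    using that unfolding RR_def
  proof (induction rule: rtrancl_induct)
    case base
    then show ?case unfolding E_def by simp
  next
    case (step v w)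
    then show ?case using Etrans[OF step.IH stepE[OF step.hyps(2)]] by blast
  qed
  have claim2: "c (outer z) = (fst (psi \<pi> z), Suc (snd (psi \<pi> z)))" if "z \<in> Pts n" for z
  proof -
    obtain i l where il: "z = (i, l)" by force
    then have "l = 0 \<or> l = 1" using that by simp
    then show ?thesis using il by (auto simp: c_def outer_def)
  qed
  have claim3: "(outer z, c (outer z)) \<in> RR ?a b" if z: "z \<in> Pts n" for z
  proof -
    obtain i l where il: "z = (i, l)" by force
    show ?thesis
    proof (cases "l = 0")
      case True
      then have "i \<in> {1..n}" using z il by simp
      then have A: "{(i, 0), (\<pi> i, 1)} \<in> ?a" unfolding unitP_def by blast
      have "c (outer z) = (\<pi> i, 1)" using il True by (simp add: c_def)
      then show ?thesis using a_step[OF A, of "(i, 0)" "(\<pi> i, 1)"] il True by simp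
    next
      case False
      then have "l = 1" using z il by simp
      then show ?thesis using il by (simp add: c_def)
    qed
  qed
  have px: "psi \<pi> x \<in> Pts n" and py: "psi \<pi> y \<in> Pts n" using psi_Pts[OF p] x y by blast+
  show ?thesis
  proof
    assume "(outer x, outer y) \<in> RR ?a b"
    then have "(c (outer x), c (outer y)) \<in> E" by (rule claim1)
    then have e: "((fst (psi \<pi> x), Suc (snd (psi \<pi> x))), (fst (psi \<pi> y), Suc (snd (psi \<pi> y)))) \<in> E"
      using claim2[OF x] claim2[OF y] by simp
    show "\<exists>B\<in>b. psi \<pi> x \<in> B \<and> psi \<pi> y \<in> B"
    proof (cases "psi \<pi> x = psi \<pi> y")
      case True
      then show ?thesis using Istar_cover[OF b px] by auto
    next
      case False
      then have "((fst (psi \<pi> x), Suc (snd (psi \<pi> x))), (fst (psi \<pi> y), Suc (snd (psi \<pi> y)))) \<in> blockrel (shift_up b)"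
        using e unfolding E_def by (auto simp: prod_eq_iff)
      then obtain C where C: "C \<in> shift_up b" "(fst (psi \<pi> x), Suc (snd (psi \<pi> x))) \<in> C"
          "(fst (psi \<pi> y), Suc (snd (psi \<pi> y))) \<in> C" unfolding blockrel_def by blast
      obtain B where B: "B \<in> b" "C = (\<lambda>(i, l). (i, l + 1)) ` B" using C(1) unfolding shift_up_def by blast
      have "psi \<pi> x \<in> B" using C(2) B(2) by (auto simp: prod_eq_iff)
      moreover have "psi \<pi> y \<in> B" using C(3) B(2) by (auto simp: prod_eq_iff)
      ultimately show ?thesis using B(1) by blast
    qed
  next
    assume "\<exists>B\<in>b. psi \<pi> x \<in> B \<and> psi \<pi> y \<in> B"
    then obtain B where B: "B \<in> b" "psi \<pi> x \<in> B" "psi \<pi> y \<in> B" by blast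
    have "((fst (psi \<pi> x), Suc (snd (psi \<pi> x))), (fst (psi \<pi> y), Suc (snd (psi \<pi> y)))) \<in> RR ?a b"
      using b_step[OF B(1), of "fst (psi \<pi> x)" "snd (psi \<pi> x)" "fst (psi \<pi> y)" "snd (psi \<pi> y)"] B by simp
    then have "(c (outer x), c (outer y)) \<in> RR ?a b" using claim2[OF x] claim2[OF y] by simp
    then show "(outer x, outer y) \<in> RR ?a b"
      using claim3[OF x] claim3[OF y] RR_sym RR_trans by meson
  qed
qed

lemma pmult_unit:
  assumes p: "\<pi> permutes {1..n}" and b: "b \<in> Istar n"
  shows "pmult n (unitP n \<pi>) b = pull n \<pi> b"
proof -
  have key: "cls n (unitP n \<pi>) b x = {y \<in> Pts n. psi \<pi> y \<in> B}"
    if x: "x \<in> Pts n" and B: "B \<in> b" "psi \<pi> x \<in> B" for x B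
  proof -
    have "y \<in> cls n (unitP n \<pi>) b x \<longleftrightarrow> y \<in> Pts n \<and> psi \<pi> y \<in> B" for y
    proof (cases "y \<in> Pts n")
      case True
      have "y \<in> cls n (unitP n \<pi>) b x \<longleftrightarrow> (\<exists>B'\<in>b. psi \<pi> x \<in> B' \<and> psi \<pi> y \<in> B')"
        using pmult_unit_rel[OF p b x True] True unfolding cls_def by simp
      also have "\<dots> \<longleftrightarrow> psi \<pi> y \<in> B" using B Istar_disj[OF b] by blast
      finally show ?thesis using True by simp
    next
      case False
      then show ?thesis unfolding cls_def by simp
    qed
    then show ?thesis by blast
  qed
  show ?thesis
  proof
    show "pmult n (unitP n \<pi>) b \<subseteq> pull n \<pi> b"
    proof
      fix C assume "C \<in> pmult n (unitP n \<pi>) b"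
      then obtain x where x: "x \<in> Pts n" "C = cls n (unitP n \<pi>) b x" unfolding pmult_cls by blast
      obtain B where B: "B \<in> b" "psi \<pi> x \<in> B" using Istar_cover[OF b psi_Pts[OF p x(1)]] by blast
      show "C \<in> pull n \<pi> b" using key[OF x(1) B] x(2) B(1) unfolding pull_def by blast
    qed
    show "pull n \<pi> b \<subseteq> pmult n (unitP n \<pi>) b"
    proof
      fix C assume "C \<in> pull n \<pi> b"
      then obtain B where B: "B \<in> b" "C = {y \<in> Pts n. psi \<pi> y \<in> B}" unfolding pull_def by blast
      obtain i where i: "(i, 0) \<in> B" using Istar_top[OF b B(1)] by blast
      have zP: "(i, 0) \<in> Pts n" using Istar_sub[OF b B(1)] i by blast
      have ip: "inv \<pi> permutes {1..n}" using p by (rule permutes_inv)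
      define x where "x = psi (inv \<pi>) (i, 0)"
      have x: "x \<in> Pts n" unfolding x_def using psi_Pts[OF ip zP] .
      have "psi \<pi> x = (i, 0)" unfolding x_def using psi_inv[OF p] .
      then have "C = cls n (unitP n \<pi>) b x" using key[OF x B(1)] i B(2) by simp
      then show "C \<in> pmult n (unitP n \<pi>) b" using x unfolding pmult_cls by blast
    qed
  qed
qed

lemma unitP_mult:
  assumes p: "\<pi> permutes {1..n}" and s: "\<sigma> permutes {1..n}"
  shows "pmult n (unitP n \<pi>) (unitP n \<sigma>) = unitP n (\<sigma> \<circ> \<pi>)"
proof -
  have us: "unitP n \<sigma> \<in> Istar n" using unitP_Sn[OF s] Sn_Istar by blast
  have "pmult n (unitP n \<pi>) (unitP n \<sigma>) = pull n \<pi> (unitP n \<sigma>)" by (rule pmult_unit[OF p us])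
  also have "\<dots> = (\<lambda>x. {y \<in> Pts n. psi \<pi> y \<in> {(x, 0), (\<sigma> x, 1)}}) ` {1..n}"
    unfolding pull_def unitP_def image_image by simp
  also have "\<dots> = (\<lambda>x. {(inv \<pi> x, 0), (\<sigma> x, 1)}) ` {1..n}"
  proof (rule image_cong[OF refl])
    fix x assume x: "x \<in> {1..n}"
    have ix: "inv \<pi> x \<in> {1..n}" using permutes_in_image[OF permutes_inv[OF p], of x] x by blast
    have sx: "\<sigma> x \<in> {1..n}" using permutes_in_image[OF s, of x] x by blast
    show "{y \<in> Pts n. psi \<pi> y \<in> {(x, 0), (\<sigma> x, 1)}} = {(inv \<pi> x, 0), (\<sigma> x, 1)}"
    proof
      show "{y \<in> Pts n. psi \<pi> y \<in> {(x, 0), (\<sigma> x, 1)}} \<subseteq> {(inv \<pi> x, 0), (\<sigma> x, 1)}"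
      proof
        fix y assume y: "y \<in> {y \<in> Pts n. psi \<pi> y \<in> {(x, 0), (\<sigma> x, 1)}}"
        obtain i l where il: "y = (i, l)" by force
        have "l = 0 \<or> l = 1" using y il by simp
        then show "y \<in> {(inv \<pi> x, 0), (\<sigma> x, 1)}"
        proof
          assume l0: "l = 0"
          then have "\<pi> i = x" using y il by auto
          then have "i = inv \<pi> x" using permutes_inverses(2)[OF p, of i] by simp
          then show ?thesis using il l0 by simp
        next
          assume l1: "l = 1"
          then show ?thesis using y il by auto
        qed
      qed
      show "{(inv \<pi> x, 0), (\<sigma> x, 1)} \<subseteq> {y \<in> Pts n. psi \<pi> y \<in> {(x, 0), (\<sigma> x, 1)}}"
        using ix sx permutes_inverses(1)[OF p, of x] by auto
    qed
  qed
  also have "\<dots> = (\<lambda>y. {(y, 0), ((\<sigma> \<circ> \<pi>) y, 1)}) ` {1..n}"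
  proof
    show "(\<lambda>x. {(inv \<pi> x, 0), (\<sigma> x, 1)}) ` {1..n} \<subseteq> (\<lambda>y. {(y, 0), ((\<sigma> \<circ> \<pi>) y, 1)}) ` {1..n}"
    proof
      fix C assume "C \<in> (\<lambda>x. {(inv \<pi> x, 0), (\<sigma> x, 1)}) ` {1..n}"
      then obtain x where x: "x \<in> {1..n}" "C = {(inv \<pi> x, 0), (\<sigma> x, 1)}" by blast
      have ix: "inv \<pi> x \<in> {1..n}" using permutes_in_image[OF permutes_inv[OF p], of x] x by blast
      have "C = {(inv \<pi> x, 0), ((\<sigma> \<circ> \<pi>) (inv \<pi> x), 1)}"
        using x(2) permutes_inverses(1)[OF p, of x] by simp
      then show "C \<in> (\<lambda>y. {(y, 0), ((\<sigma> \<circ> \<pi>) y, 1)}) ` {1..n}" using ix by blast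
    qed
    show "(\<lambda>y. {(y, 0), ((\<sigma> \<circ> \<pi>) y, 1)}) ` {1..n} \<subseteq> (\<lambda>x. {(inv \<pi> x, 0), (\<sigma> x, 1)}) ` {1..n}"
    proof
      fix C assume "C \<in> (\<lambda>y. {(y, 0), ((\<sigma> \<circ> \<pi>) y, 1)}) ` {1..n}"
      then obtain y where y: "y \<in> {1..n}" "C = {(y, 0), ((\<sigma> \<circ> \<pi>) y, 1)}" by blast
      have py: "\<pi> y \<in> {1..n}" using permutes_in_image[OF p, of y] y by blast
      have "C = {(inv \<pi> (\<pi> y), 0), (\<sigma> (\<pi> y), 1)}"
        using y(2) permutes_inverses(2)[OF p, of y] by simp
      then show "C \<in> (\<lambda>x. {(inv \<pi> x, 0), (\<sigma> x, 1)}) ` {1..n}" using py by blast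
    qed
  qed
  finally show ?thesis unfolding unitP_def .
qed

lemma funpow_permutes: "\<pi> permutes S \<Longrightarrow> (\<pi> ^^ m) permutes S"
  by (induction m) (auto intro: permutes_compose permutes_id)

definition closedP :: "nat \<Rightarrow> (nat \<times> nat) set set set \<Rightarrow> bool" where
  "closedP n X \<longleftrightarrow> X \<subseteq> Istar n \<and> (\<forall>a\<in>X. \<forall>b\<in>X. pmult n a b \<in> X)"

lemma unit_id_in:
  assumes X: "closedP n X" and p: "\<pi> permutes {1..n}" and u: "unitP n \<pi> \<in> X"
  shows "unitP n id \<in> X"
proof -
  have pw: "unitP n (\<pi> ^^ Suc m) \<in> X" for m
  proof (induction m)
    case 0 then show ?case using u by simp
  next
    case (Suc m)
    have "pmult n (unitP n \<pi>) (unitP n (\<pi> ^^ Suc m)) = unitP n ((\<pi> ^^ Suc m) \<circ> \<pi>)"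
      by (rule unitP_mult[OF p funpow_permutes[OF p]])
    also have "(\<pi> ^^ Suc m) \<circ> \<pi> = \<pi> ^^ Suc (Suc m)" by (simp only: funpow_Suc_right)
    finally show ?case using X u Suc unfolding closedP_def by metis
  qed
  have "permutation \<pi>" using permutes_imp_permutation[OF _ p] by simp
  then obtain k where k: "(\<pi> ^^ k) = id" "k > 0" by (rule permutation_is_nilpotent)
  then obtain m where "k = Suc m" by (cases k) auto
  then show ?thesis using pw[of m] k by simp
qed

lemma card_lt:
  assumes a: "a \<in> Istar n" and b: "b \<in> Istar n"
    and A1: "A1 \<in> a" and A2: "A2 \<in> a" and ne: "A1 \<noteq> A2"
    and k: "(k, 1) \<in> A1" and l: "(l, 1) \<in> A2"
    and B: "B \<in> b" "(k, 0) \<in> B" "(l, 0) \<in> B"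
  shows "card (pmult n a b) < card a"
proof -
  define top where "top A = (SOME t. t \<in> A \<and> snd t = 0)" for A :: "(nat \<times> nat) set"
  define h where "h A = cls n a b (top A)" for A
  have top: "top A \<in> A \<and> snd (top A) = 0" if Aa: "A \<in> a" for A
  proof -
    obtain i where "(i, 0) \<in> A" using Istar_top[OF a Aa] by blast
    then have "\<exists>t. t \<in> A \<and> snd t = 0" by force
    then show ?thesis unfolding top_def by (rule someI_ex)
  qed
  have topP: "top A \<in> Pts n" if "A \<in> a" for A using top[OF that] Istar_sub[OF a that] by blast
  have outer0: "outer t = t" if "snd t = 0" for t using that by (cases t) (simp add: outer_def)
  have hx: "h A = cls n a b x" if A: "A \<in> a" and x: "x \<in> A" "snd x = 0" for A x
  proof -
    have xP: "x \<in> Pts n" using Istar_sub[OF a A] x by blast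
    have "(top A, x) \<in> RR a b" using a_step[OF A] top[OF A] x by blast
    then have "(outer (top A), outer x) \<in> RR a b" using outer0 top[OF A] x by simp
    then have "x \<in> cls n a b (top A)" using xP unfolding cls_def by simp
    then show ?thesis unfolding h_def using cls_eq[OF topP[OF A]] by simp
  qed
  have img: "h ` a = pmult n a b"
  proof
    show "h ` a \<subseteq> pmult n a b" unfolding h_def pmult_cls using topP by blast
    show "pmult n a b \<subseteq> h ` a"
    proof
      fix C assume C: "C \<in> pmult n a b"
      then obtain x where x: "x \<in> Pts n" "C = cls n a b x" unfolding pmult_cls by blast
      obtain j where j: "(j, 0) \<in> C" using Istar_top[OF pmult_Istar[OF a b] C] by blast
      have jP: "(j, 0) \<in> Pts n" using j x unfolding cls_def by blast
      have Cj: "C = cls n a b (j, 0)" using cls_eq[OF x(1)] j x(2) by simp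
      obtain A where A: "A \<in> a" "(j, 0) \<in> A" using Istar_cover[OF a jP] by blast
      have "h A = C" using hx[OF A(1) A(2)] Cj by simp
      then show "C \<in> h ` a" using A(1) by blast
    qed
  qed
  have "h A1 = h A2"
  proof -
    have t1: "top A1 \<in> A1" "snd (top A1) = 0" using top[OF A1] by auto
    have t2: "top A2 \<in> A2" "snd (top A2) = 0" using top[OF A2] by auto
    have "(top A1, (k, 1)) \<in> RR a b" using a_step[OF A1 t1(1) k] .
    moreover have "((k, Suc 0), (l, Suc 0)) \<in> RR a b" using b_step[OF B] .
    moreover have "((l, 1), top A2) \<in> RR a b" using a_step[OF A2 l t2(1)] .
    ultimately have "(outer (top A1), outer (top A2)) \<in> RR a b"
      using outer0 t1 t2 RR_trans by (metis One_nat_def)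
    then have "top A2 \<in> cls n a b (top A1)" using topP[OF A2] unfolding cls_def by simp
    then show ?thesis unfolding h_def using cls_eq[OF topP[OF A1]] by simp
  qed
  then have "\<not> inj_on h a" using A1 A2 ne by (auto dest: inj_onD)
  then have "card (h ` a) \<noteq> card a" using inj_on_iff_eq_card[OF Istar_finite[OF a]] by blast
  moreover have "card (h ` a) \<le> card a" using card_image_le[OF Istar_finite[OF a]] .
  ultimately show ?thesis using img by simp
qed

lemma perm_exists:
  assumes "k \<in> S" "l \<in> S" "p \<in> S" "q \<in> S" "k \<noteq> l" "p \<noteq> q"
  shows "\<exists>\<pi>. \<pi> permutes S \<and> \<pi> k = p \<and> \<pi> l = q"
proof -
  define l' where "l' = transpose k p l"
  have l'S: "l' \<in> S" using assms unfolding l'_def transpose_def by auto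
  have l'p: "l' \<noteq> p" using assms unfolding l'_def transpose_def by auto
  define \<pi> where "\<pi> = transpose l' q \<circ> transpose k p"
  have "\<pi> permutes S" unfolding \<pi>_def
    by (rule permutes_compose) (auto intro: permutes_swap_id assms l'S)
  moreover have "\<pi> k = p" unfolding \<pi>_def using l'p assms(6) by (simp add: transpose_def)
  moreover have "\<pi> l = q" unfolding \<pi>_def l'_def by (simp add: transpose_def)
  ultimately show ?thesis by blast
qed

definition Zp :: "nat \<Rightarrow> (nat \<times> nat) set set" where "Zp n = {Pts n}"

lemma Zp_Istar: "n \<ge> 1 \<Longrightarrow> Zp n \<in> Istar n"
proof -
  assume n: "n \<ge> 1"
  have "(1, 0) \<in> Pts n" "(1, 1) \<in> Pts n" using n by simp_all
  then have "Pts n \<noteq> {}" by blast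
  then have "partition_on (Pts n) {Pts n}" by (simp add: partition_on_space)
  then show ?thesis unfolding Istar_def Zp_def using \<open>(1, 0) \<in> Pts n\<close> \<open>(1, 1) \<in> Pts n\<close> by blast
qed

lemma Zp_not_Sn: "n \<ge> 2 \<Longrightarrow> Zp n \<notin> Sn n"
proof
  assume n: "n \<ge> 2" and Z: "Zp n \<in> Sn n"
  have P: "(1, 0) \<in> Pts n" "(2, 0) \<in> Pts n" using n by simp_all
  have "\<not> topinj (Zp n)"
  proof
    assume "topinj (Zp n)"
    then have "\<forall>i j. (i, 0) \<in> Pts n \<longrightarrow> (j, 0) \<in> Pts n \<longrightarrow> i = j" unfolding topinj_def Zp_def by blast
    then have "(1::nat) = 2" using P by blast
    then show False by simp
  qed
  then show False using Sn_topinj[OF Z] by blast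
qed

lemma descent:
  assumes X: "closedP n X"
    and st: "\<And>x \<pi>. x \<in> X \<Longrightarrow> \<pi> permutes {1..n} \<Longrightarrow> pmult n (unitP n \<pi>) x \<in> X"
  shows "x \<in> X \<Longrightarrow> x \<notin> Sn n \<Longrightarrow> Zp n \<in> X"
proof (induction "card x" arbitrary: x rule: less_induct)
  case less
  have xI: "x \<in> Istar n" using less.prems X unfolding closedP_def by blast
  have fin: "finite x" using Istar_finite[OF xI] .
  have "\<not> topinj x" using less.prems topinj_Sn[OF xI] by blast
  then obtain B p q where B: "B \<in> x" "(p, 0) \<in> B" "(q, 0) \<in> B" "p \<noteq> q"
    unfolding topinj_def by blast
  have "(p, 0) \<in> Pts n" "(q, 0) \<in> Pts n" using B Istar_sub[OF xI B(1)] by blast+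
  then have pq: "p \<in> {1..n}" "q \<in> {1..n}" by simp_all
  show ?case
  proof (cases "card x \<le> 1")
    case True
    then have one: "\<forall>C\<in>x. \<forall>D\<in>x. C = D" using card_le_Suc0_iff_eq[OF fin] by simp
    have xp: "partition_on (Pts n) x" using xI unfolding Istar_def by blast
    have "\<Union>x = Pts n" using partition_onD1[OF xp] by simp
    moreover have xB: "x = {B}" using one B(1) by blast
    ultimately have "B = Pts n" by simp
    then have "x = {Pts n}" using xB by simp
    then show ?thesis using less.prems unfolding Zp_def by simp
  next
    case False
    have "\<not> (\<forall>C\<in>x. \<forall>D\<in>x. C = D)" using False card_le_Suc0_iff_eq[OF fin] by simp
    then obtain A1 A2 where A: "A1 \<in> x" "A2 \<in> x" "A1 \<noteq> A2" by blast
    obtain k where k: "(k, 1) \<in> A1" using Istar_bot[OF xI A(1)] by blast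
    obtain l where l: "(l, 1) \<in> A2" using Istar_bot[OF xI A(2)] by blast
    have "(k, 1) \<in> Pts n" "(l, 1) \<in> Pts n" using k l Istar_sub[OF xI A(1)] Istar_sub[OF xI A(2)] by blast+
    then have kl: "k \<in> {1..n}" "l \<in> {1..n}" by simp_all
    have "k \<noteq> l" using Istar_disj[OF xI A(1) A(2) k] l A(3) by blast
    then obtain \<pi> where \<pi>: "\<pi> permutes {1..n}" "\<pi> k = p" "\<pi> l = q"
      using perm_exists[OF kl pq] B(4) by blast
    define b where "b = pmult n (unitP n \<pi>) x"
    have bX: "b \<in> X" unfolding b_def using st[OF less.prems(1) \<pi>(1)] .
    have bI: "b \<in> Istar n" using bX X unfolding closedP_def by blast
    have bpull: "b = pull n \<pi> x" unfolding b_def using pmult_unit[OF \<pi>(1) xI] .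
    define B' where "B' = {y \<in> Pts n. psi \<pi> y \<in> B}"
    have B'b: "B' \<in> b" unfolding bpull pull_def B'_def using B(1) by blast
    have kB': "(k, 0) \<in> B'" "(l, 0) \<in> B'" unfolding B'_def using kl \<pi> B by simp_all
    define y where "y = pmult n x b"
    have yX: "y \<in> X" unfolding y_def using X less.prems(1) bX unfolding closedP_def by blast
    have "card y < card x" unfolding y_def
      by (rule card_lt[OF xI bI A k l B'b kB'])
    moreover have "y \<notin> Sn n" unfolding y_def using pmult_Sn_left[OF xI bI] less.prems(2) by blast
    ultimately show ?thesis using less.hyps yX by blast
  qed
qed

lemma id_permutes_n: "(id :: nat \<Rightarrow> nat) permutes {1..n}"
  by (rule permutes_id)

lemma Sn_closed: "a \<in> Sn n \<Longrightarrow> b \<in> Sn n \<Longrightarrow> pmult n a b \<in> Sn n"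
proof -
  assume a: "a \<in> Sn n" and b: "b \<in> Sn n"
  obtain \<pi> where p: "\<pi> permutes {1..n}" "a = unitP n \<pi>" using Sn_unitP[OF a] by blast
  obtain \<sigma> where s: "\<sigma> permutes {1..n}" "b = unitP n \<sigma>" using Sn_unitP[OF b] by blast
  have "pmult n a b = unitP n (\<sigma> \<circ> \<pi>)" using unitP_mult[OF p(1) s(1)] p s by simp
  moreover have "(\<sigma> \<circ> \<pi>) permutes {1..n}" using permutes_compose[OF p(1) s(1)] .
  ultimately show ?thesis using unitP_Sn by simp
qed

lemma split_classes:
  assumes n: "n \<ge> 2" and X: "closedP n X" and Y: "closedP n Y"
    and disj: "X \<inter> Y = {}" and un: "X \<union> Y = Istar n"
    and idX: "unitP n id \<in> X" and Yne: "Y \<noteq> {}"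
  shows "X = Sn n \<and> Y = Istar n - Sn n"
proof -
  have SnX: "Sn n \<subseteq> X"
  proof
    fix g assume g: "g \<in> Sn n"
    obtain \<pi> where p: "\<pi> permutes {1..n}" "g = unitP n \<pi>" using Sn_unitP[OF g] by blast
    show "g \<in> X"
    proof (rule ccontr)
      assume "g \<notin> X"
      then have "g \<in> Y" using g Sn_Istar un by blast
      then have "unitP n id \<in> Y" using unit_id_in[OF Y p(1)] p(2) by simp
      then show False using idX disj by blast
    qed
  qed
  have stX: "pmult n (unitP n \<pi>) x \<in> X" if "x \<in> X" "\<pi> permutes {1..n}" for x \<pi>
    using X SnX unitP_Sn[OF that(2)] that(1) unfolding closedP_def by blast
  have stY: "pmult n (unitP n \<pi>) y \<in> Y" if y: "y \<in> Y" and p: "\<pi> permutes {1..n}" for y \<pi>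
  proof (rule ccontr)
    assume nY: "pmult n (unitP n \<pi>) y \<notin> Y"
    have yI: "y \<in> Istar n" using y Y unfolding closedP_def by blast
    have uI: "unitP n \<pi> \<in> Istar n" using unitP_Sn[OF p] Sn_Istar by blast
    have zI: "pmult n (unitP n \<pi>) y \<in> Istar n" using pmult_Istar[OF uI yI] .
    then have zX: "pmult n (unitP n \<pi>) y \<in> X" using nY un by blast
    have ip: "inv \<pi> permutes {1..n}" using p by (rule permutes_inv)
    have "pmult n (unitP n (inv \<pi>)) (pmult n (unitP n \<pi>) y) = y"
      using pmult_unit[OF ip zI] pmult_unit[OF p yI] pull_pull[OF p yI] by simp
    then have "y \<in> X" using stX[OF zX ip] by simp
    then show False using y disj by blast
  qed
  obtain y where y: "y \<in> Y" using Yne by blast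
  have "y \<notin> Sn n" using y SnX disj by blast
  then have ZY: "Zp n \<in> Y" using descent[OF Y stY y] by blast
  have XS: "X \<subseteq> Sn n"
  proof
    fix x assume x: "x \<in> X"
    show "x \<in> Sn n"
    proof (rule ccontr)
      assume "x \<notin> Sn n"
      then have "Zp n \<in> X" using descent[OF X stX x] by blast
      then show False using ZY disj by blast
    qed
  qed
  then have "X = Sn n" using SnX by blast
  moreover then have "Y = Istar n - Sn n" using un disj by blast
  ultimately show ?thesis by blast
qed

theorem mainTheorem8:
  fixes n :: nat and T :: "(nat \<times> nat) set set set"
  assumes "n \<ge> 2"
  shows "completely_isolated_subsemigroup n T \<longleftrightarrow>
           T = Istar n \<or> T = Sn n \<or> T = Istar n - Sn n"
proof
  assume ci: "completely_isolated_subsemigroup n T"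
  have Tne: "T \<noteq> {}" and TI: "T \<subseteq> Istar n" and Tc: "\<forall>a\<in>T. \<forall>b\<in>T. pmult n a b \<in> T"
    and iso: "\<forall>a\<in>Istar n. \<forall>b\<in>Istar n. pmult n a b \<in> T \<longrightarrow> a \<in> T \<or> b \<in> T"
    using ci unfolding completely_isolated_subsemigroup_def by blast+
  define U where "U = Istar n - T"
  show "T = Istar n \<or> T = Sn n \<or> T = Istar n - Sn n"
  proof (cases "U = {}")
    case True
    then show ?thesis using TI unfolding U_def by blast
  next
    case False
    have cT: "closedP n T" using TI Tc unfolding closedP_def by blast
    have cU: "closedP n U" unfolding closedP_def
    proof (intro conjI ballI)
      show "U \<subseteq> Istar n" unfolding U_def by blast
      fix a b assume a: "a \<in> U" and b: "b \<in> U"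
      then have "pmult n a b \<in> Istar n" using pmult_Istar unfolding U_def by blast
      moreover have "pmult n a b \<notin> T" using iso a b unfolding U_def by blast
      ultimately show "pmult n a b \<in> U" unfolding U_def by blast
    qed
    have idI: "unitP n id \<in> Istar n" using unitP_Sn[OF id_permutes_n] Sn_Istar by blast
    show ?thesis
    proof (cases "unitP n id \<in> T")
      case True
      have "T = Sn n" using split_classes[OF assms cT cU _ _ True False] TI unfolding U_def by blast
      then show ?thesis by blast
    next
      case nT: False
      have "unitP n id \<in> U" using idI nT unfolding U_def by blast
      then have "T = Istar n - Sn n" using split_classes[OF assms cU cT _ _ _ Tne] TI unfolding U_def by blast
      then show ?thesis by blast
    qed
  qed
next
  assume T: "T = Istar n \<or> T = Sn n \<or> T = Istar n - Sn n"
  have n1: "n \<ge> 1" using assms by simp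
  have idS: "unitP n id \<in> Sn n" using unitP_Sn[OF id_permutes_n] .
  have ZI: "Zp n \<in> Istar n" using Zp_Istar[OF n1] .
  have ZS: "Zp n \<notin> Sn n" using Zp_not_Sn[OF assms] .
  show "completely_isolated_subsemigroup n T"
    unfolding completely_isolated_subsemigroup_def
  proof (intro conjI)
    show "T \<noteq> {}" using T idS Sn_Istar ZI ZS by blast
    show "T \<subseteq> Istar n" using T Sn_Istar by blast
    show "\<forall>a\<in>T. \<forall>b\<in>T. pmult n a b \<in> T"
      using T pmult_Istar Sn_closed Sn_Istar pmult_Sn_left by blast
    show "\<forall>a\<in>Istar n. \<forall>b\<in>Istar n. pmult n a b \<in> T \<longrightarrow> a \<in> T \<or> b \<in> T"
      using T pmult_Sn_left Sn_closed by blast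
  qed
qed

end
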